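(* Let $G$ be a finite soluble group, $N$ a minimal normal subgroup of $G$, $x\in G\setminus\{1\}$ with $\mathrm d(x,N)>3$ in $\Gamma(G)$, and $y\in\langle x\rangle$ of prime order. Then $C_G(y)N$ is a Frobenius group with Frobenius complement $C_G(y)$, and $|C_G(y)|$ is odd.
   Context: For a group $G$, the normalising graph $\Gamma(G)$ has vertex set $G\setminus\{1\}$, and two distinct vertices $x,y$ are adjacent if and only if $\langle x\rangle$ normalises $\langle y\rangle$ or $\langle y\rangle$ normalises $\langle x\rangle$. $\mathrm d$ is graph distance (infinite if there is no path), and $\mathrm d(x,N)=\min\{\mathrm d(x,n):n\in N\setminus\{1\}\}$. *)

theory Defs
  imports "HOL-Algebra.Algebra" "HOL-Library.Extended_Nat"
begin

definition cyc :: "('a, 'b) monoid_scheme \<Rightarrow> 'a \<Rightarrow> 'a set" where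
  "cyc G x = generate G {x}"

definition normalises :: "('a, 'b) monoid_scheme \<Rightarrow> 'a set \<Rightarrow> 'a set \<Rightarrow> bool" where
  "normalises G H K \<longleftrightarrow>
     (\<forall>h\<in>H. (\<lambda>k. h \<otimes>\<^bsub>G\<^esub> k \<otimes>\<^bsub>G\<^esub> inv\<^bsub>G\<^esub> h) ` K = K)"

(* adjacency in the normalising graph Gamma(G), vertex set G \ {1} *)
definition norm_adj :: "('a, 'b) monoid_scheme \<Rightarrow> 'a \<Rightarrow> 'a \<Rightarrow> bool" where
  "norm_adj G x y \<longleftrightarrow>
     x \<in> carrier G - {\<one>\<^bsub>G\<^esub>} \<and> y \<in> carrier G - {\<one>\<^bsub>G\<^esub>} \<and> x \<noteq> y \<and>
     (normalises G (cyc G x) (cyc G y) \<or> normalises G (cyc G y) (cyc G x))"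

definition norm_walk :: "('a, 'b) monoid_scheme \<Rightarrow> 'a list \<Rightarrow> 'a \<Rightarrow> 'a \<Rightarrow> nat \<Rightarrow> bool" where
  "norm_walk G p x y n \<longleftrightarrow>
     length p = Suc n \<and> hd p = x \<and> last p = y \<and>
     set p \<subseteq> carrier G - {\<one>\<^bsub>G\<^esub>} \<and>
     (\<forall>i < n. norm_adj G (p ! i) (p ! Suc i))"

(* graph distance in Gamma(G) (infinity if there is no path) *)
definition norm_dist :: "('a, 'b) monoid_scheme \<Rightarrow> 'a \<Rightarrow> 'a \<Rightarrow> enat" where
  "norm_dist G x y = Inf {enat n | n. \<exists>p. norm_walk G p x y n}"

definition norm_dist_set :: "('a, 'b) monoid_scheme \<Rightarrow> 'a \<Rightarrow> 'a set \<Rightarrow> enat" where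
  "norm_dist_set G x N = Inf (norm_dist G x ` (N - {\<one>\<^bsub>G\<^esub>}))"

definition minimal_normal :: "('a, 'b) monoid_scheme \<Rightarrow> 'a set \<Rightarrow> bool" where
  "minimal_normal G N \<longleftrightarrow>
     N \<lhd> G \<and> N \<noteq> {\<one>\<^bsub>G\<^esub>} \<and>
     (\<forall>M. M \<lhd> G \<and> M \<subseteq> N \<longrightarrow> M = {\<one>\<^bsub>G\<^esub>} \<or> M = N)"

definition centraliser :: "('a, 'b) monoid_scheme \<Rightarrow> 'a \<Rightarrow> 'a set" where
  "centraliser G y = {g \<in> carrier G. g \<otimes>\<^bsub>G\<^esub> y = y \<otimes>\<^bsub>G\<^esub> g}"

definition frobenius_with_complement :: "('a, 'b) monoid_scheme \<Rightarrow> 'a set \<Rightarrow> 'a set \<Rightarrow> bool" where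
  "frobenius_with_complement G K H \<longleftrightarrow>
     subgroup K G \<and> subgroup H G \<and> H \<subseteq> K \<and> H \<noteq> {\<one>\<^bsub>G\<^esub>} \<and> H \<noteq> K \<and>
     (\<forall>g \<in> K - H. H \<inter> (\<lambda>h. g \<otimes>\<^bsub>G\<^esub> h \<otimes>\<^bsub>G\<^esub> inv\<^bsub>G\<^esub> g) ` H = {\<one>\<^bsub>G\<^esub>})"

end

theory Submission
  imports Defs
begin

lemma even_card_invol:
  assumes "finite S" "\<forall>s\<in>S. f s \<in> S \<and> f s \<noteq> s \<and> f (f s) = s"
  shows "even (card S)"
  using assms
proof (induction "card S" arbitrary: S rule: less_induct)
  case less
  show ?case
  proof (cases "S = {}")
    case True thus ?thesis by simp
  next
    case False
    then obtain s where s: "s \<in> S" by auto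
    let ?S' = "S - {s, f s}"
    have fs: "f s \<in> S" "f s \<noteq> s" using less.prems s by auto
    have "card {s, f s} \<le> card S" using less.prems(1) s fs by (intro card_mono) auto
    hence c: "card S = card ?S' + 2" using less.prems(1) s fs
      by (simp add: card_Diff_subset)
    have "even (card ?S')"
    proof (rule less.hyps)
      show "card ?S' < card S" using c by simp
      show "finite ?S'" using less.prems by simp
      show "\<forall>r\<in>?S'. f r \<in> ?S' \<and> f r \<noteq> r \<and> f (f r) = r"
        using less.prems(2) s by auto (metis)+
    qed
    thus ?thesis using c by simp
  qed
qed

context group
begin

lemma inv_cancel_l1: "a \<in> carrier G \<Longrightarrow> z \<in> carrier G \<Longrightarrow> inv a \<otimes> (a \<otimes> z) = z"
  by (simp add: m_assoc[symmetric])
lemma inv_cancel_l2: "a \<in> carrier G \<Longrightarrow> z \<in> carrier G \<Longrightarrow> a \<otimes> (inv a \<otimes> z) = z"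
  by (simp add: m_assoc[symmetric])

lemma centraliser_subgroup:
  assumes a: "a \<in> carrier G"
  shows "subgroup (centraliser G a) G"
proof (rule subgroupI)
  show "centraliser G a \<subseteq> carrier G" unfolding centraliser_def by auto
  show "centraliser G a \<noteq> {}" using a unfolding centraliser_def by auto
next
  fix g assume g: "g \<in> centraliser G a"
  hence gc: "g \<in> carrier G" and e: "g \<otimes> a = a \<otimes> g" unfolding centraliser_def by auto
  have "inv g \<otimes> a = inv g \<otimes> (a \<otimes> g) \<otimes> inv g"
    using gc a by (simp add: m_assoc inv_cancel_l1 inv_cancel_l2)
  also have "\<dots> = inv g \<otimes> (g \<otimes> a) \<otimes> inv g" using e by simp
  also have "\<dots> = a \<otimes> inv g" using gc a by (simp add: m_assoc[symmetric])
  finally show "inv g \<in> centraliser G a" using gc unfolding centraliser_def by auto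
next
  fix g h assume "g \<in> centraliser G a" "h \<in> centraliser G a"
  thus "g \<otimes> h \<in> centraliser G a" using a unfolding centraliser_def
    by (auto simp: m_assoc) (metis m_assoc)
qed

lemma cyc_sub_centraliser:
  assumes a: "a \<in> carrier G" and g: "g \<in> carrier G" and e: "g \<otimes> a = a \<otimes> g"
  shows "cyc G g \<subseteq> centraliser G a"
  unfolding cyc_def
  by (rule generate_subgroup_incl) (use a g e centraliser_subgroup in \<open>auto simp: centraliser_def\<close>)

lemma cyc_carrier: "g \<in> carrier G \<Longrightarrow> cyc G g \<subseteq> carrier G"
  unfolding cyc_def by (rule generate_incl) auto

lemma comm_normalises:
  assumes g: "g \<in> carrier G" and z: "z \<in> carrier G" and e: "g \<otimes> z = z \<otimes> g"
  shows "normalises G (cyc G g) (cyc G z)"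
  unfolding normalises_def
proof
  fix h assume h: "h \<in> cyc G g"
  have hc: "h \<in> carrier G" using h cyc_carrier g by auto
  have "h \<in> centraliser G z" using cyc_sub_centraliser[OF z g e] h by auto
  hence hz: "h \<otimes> z = z \<otimes> h" unfolding centraliser_def by auto
  have sub: "cyc G z \<subseteq> centraliser G h"
    by (rule cyc_sub_centraliser[OF hc z hz[symmetric]])
  have "\<And>k. k \<in> cyc G z \<Longrightarrow> h \<otimes> k \<otimes> inv h = k"
  proof -
    fix k assume k: "k \<in> cyc G z"
    hence kc: "k \<in> carrier G" and "k \<otimes> h = h \<otimes> k" using sub unfolding centraliser_def by auto
    thus "h \<otimes> k \<otimes> inv h = k" using hc by (metis inv_solve_right m_closed)
  qed
  thus "(\<lambda>k. h \<otimes> k \<otimes> inv h) ` cyc G z = cyc G z" by simp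
qed

lemma walk_single: "a \<in> carrier G - {\<one>} \<Longrightarrow> norm_walk G [a] a a 0"
  unfolding norm_walk_def by auto

lemma walk_snoc:
  assumes w: "norm_walk G p a b n" and adj: "norm_adj G b c"
  shows "norm_walk G (p @ [c]) a c (Suc n)"
proof -
  have lp: "length p = Suc n" and hp: "hd p = a" and lb: "last p = b"
    and sp: "set p \<subseteq> carrier G - {\<one>}" and ad: "\<forall>i<n. norm_adj G (p ! i) (p ! Suc i)"
    using w unfolding norm_walk_def by auto
  have pn: "p \<noteq> []" using lp by auto
  have pb: "p ! n = b" using lb pn lp by (simp add: last_conv_nth)
  have c: "c \<in> carrier G - {\<one>}" using adj unfolding norm_adj_def by auto
  have "\<forall>i<Suc n. norm_adj G ((p @ [c]) ! i) ((p @ [c]) ! Suc i)"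
  proof (intro allI impI)
    fix i assume i: "i < Suc n"
    show "norm_adj G ((p @ [c]) ! i) ((p @ [c]) ! Suc i)"
    proof (cases "i < n")
      case True thus ?thesis using ad lp by (simp add: nth_append)
    next
      case False hence "i = n" using i by simp
      thus ?thesis using pb adj lp by (simp add: nth_append)
    qed
  qed
  thus ?thesis using lp hp sp c pn unfolding norm_walk_def by auto
qed

lemma walk_step:
  assumes w: "norm_walk G p a b n" and e: "b = c \<or> norm_adj G b c"
  shows "\<exists>q m. m \<le> Suc n \<and> norm_walk G q a c m"
  using e walk_snoc[OF w] w by (metis le_Suc_eq order_refl)

lemma walk_dist: "norm_walk G p a b n \<Longrightarrow> norm_dist G a b \<le> enat n"
  unfolding norm_dist_def by (rule Inf_lower) blast

lemma comm_adj:
  assumes "a \<in> carrier G - {\<one>}" "b \<in> carrier G - {\<one>}" "a \<noteq> b" "a \<otimes> b = b \<otimes> a"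
  shows "norm_adj G a b"
  using assms comm_normalises unfolding norm_adj_def by auto

lemma involution_exists:
  assumes H: "subgroup H G" and fin: "finite H" and ev: "even (card H)"
  shows "\<exists>t\<in>H. t \<noteq> \<one> \<and> t \<otimes> t = \<one>"
proof (rule ccontr)
  assume no: "\<not> ?thesis"
  have Hc: "H \<subseteq> carrier G" using H subgroup.subset by blast
  let ?S = "{g\<in>H. inv g \<noteq> g}"
  have T: "{g\<in>H. inv g = g} = {\<one>}"
  proof
    show "{\<one>} \<subseteq> {g\<in>H. inv g = g}" using H subgroup.one_closed by auto
    show "{g\<in>H. inv g = g} \<subseteq> {\<one>}"
    proof
      fix g assume g: "g \<in> {g\<in>H. inv g = g}"
      hence gc: "g \<in> carrier G" using Hc by auto
      have "g \<otimes> g = \<one>" using g gc by (metis (mono_tags, lifting) mem_Collect_eq r_inv)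
      thus "g \<in> {\<one>}" using no g by auto
    qed
  qed
  have "H = ?S \<union> {\<one>}" using T by auto
  moreover have "\<one> \<notin> ?S" by simp
  moreover have "finite ?S" using fin by simp
  ultimately have cH: "card H = Suc (card ?S)" by (metis Un_insert_right card_insert_disjoint sup_bot_right)
  have "even (card ?S)"
    by (rule even_card_invol[where f = "\<lambda>g. inv g"]) (use fin Hc H subgroup.m_inv_closed in \<open>auto simp: subsetD\<close>)
  thus False using cH ev by simp
qed

end

theorem mainTheorem10:
  fixes G (structure) and N :: "'a set" and x y :: 'a
  assumes "group G"
    and "finite (carrier G)"
    and "solvable G"
    and "minimal_normal G N"
    and "x \<in> carrier G" and "x \<noteq> \<one>"
    and "norm_dist_set G x N > 3"
    and "y \<in> cyc G x"
    and "Factorial_Ring.prime (group.ord G y)"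
  shows "frobenius_with_complement G (centraliser G y <#> N) (centraliser G y)
         \<and> odd (card (centraliser G y))"
proof -
  interpret group G by (rule assms(1))
  define C where "C = centraliser G y"
  have xc: "x \<in> carrier G" using assms(5) .
  have yc: "y \<in> carrier G" using assms(8) cyc_carrier[OF xc] by auto
  have y1: "y \<noteq> \<one>" using assms(9) by auto
  have Nn: "N \<lhd> G" and N1: "N \<noteq> {\<one>}" using assms(4) unfolding minimal_normal_def by auto
  have Ns: "subgroup N G" using Nn normal_imp_subgroup by blast
  have NC: "N \<subseteq> carrier G" using Ns subgroup.subset by blast
  have one_N: "\<one> \<in> N" using Ns subgroup.one_closed by blast
  have Cs: "subgroup C G" unfolding C_def by (rule centraliser_subgroup[OF yc])
  have CC: "C \<subseteq> carrier G" unfolding C_def centraliser_def by auto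
  have one_C: "\<one> \<in> C" using Cs subgroup.one_closed by blast
  have yC: "y \<in> C" unfolding C_def centraliser_def using yc by auto
  have xy: "y \<otimes> x = x \<otimes> y"
    using cyc_sub_centraliser[OF xc xc refl] assms(8) unfolding centraliser_def by auto
  have key: "\<And>h n. h \<in> C - {\<one>} \<Longrightarrow> n \<in> N - {\<one>} \<Longrightarrow> h = n \<or> norm_adj G h n \<Longrightarrow> False"
  proof -
    fix h n assume h: "h \<in> C - {\<one>}" and n: "n \<in> N - {\<one>}" and hn: "h = n \<or> norm_adj G h n"
    have hc: "h \<in> carrier G" using h CC by auto
    have hy: "h \<otimes> y = y \<otimes> h" using h unfolding C_def centraliser_def by auto
    have w0: "norm_walk G [x] x x 0" using walk_single assms(5,6) by auto
    have e1: "x = y \<or> norm_adj G x y"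
      using comm_adj[of x y] xc yc assms(6) y1 xy by auto
    obtain q1 m1 where q1: "m1 \<le> 1" "norm_walk G q1 x y m1" using walk_step[OF w0 e1] by auto
    have e2: "y = h \<or> norm_adj G y h"
      using comm_adj[of y h] hc yc h y1 hy by auto
    obtain q2 m2 where q2: "m2 \<le> Suc m1" "norm_walk G q2 x h m2" using walk_step[OF q1(2) e2] by auto
    obtain q3 m3 where q3: "m3 \<le> Suc m2" "norm_walk G q3 x n m3" using walk_step[OF q2(2) hn] by auto
    have "norm_dist_set G x N \<le> norm_dist G x n"
      unfolding norm_dist_set_def using n by (intro INF_lower) auto
    also have "\<dots> \<le> enat m3" by (rule walk_dist[OF q3(2)])
    also have "\<dots> \<le> 3" using q1(1) q2(1) q3(1) by (simp add: numeral_eq_enat)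
    finally show False using assms(7) by simp
  qed
  have CN: "\<And>h. h \<in> C \<Longrightarrow> h \<in> N \<Longrightarrow> h = \<one>" using key by blast
  have fpf: "\<And>h n. h \<in> C \<Longrightarrow> n \<in> N \<Longrightarrow> h \<otimes> n = n \<otimes> h \<Longrightarrow> h = \<one> \<or> n = \<one>"
  proof (rule ccontr)
    fix h n assume h: "h \<in> C" and n: "n \<in> N" and e: "h \<otimes> n = n \<otimes> h" and ne: "\<not> (h = \<one> \<or> n = \<one>)"
    have "h = n \<or> norm_adj G h n" using comm_adj[of h n] h n e ne CC NC by auto
    thus False using key h n ne by blast
  qed
  have CNeq: "C <#> N = N <#> C"
  proof
    show "C <#> N \<subseteq> N <#> C"
    proof
      fix g assume "g \<in> C <#> N"
      then obtain c n where c: "c \<in> C" and n: "n \<in> N" and g: "g = c \<otimes> n" unfolding set_mult_def by auto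
      have cc: "c \<in> carrier G" and nc: "n \<in> carrier G" using c n CC NC by auto
      have "c \<otimes> n \<otimes> inv c \<in> N" using normal.inv_op_closed2[OF Nn cc n] .
      moreover have "g = (c \<otimes> n \<otimes> inv c) \<otimes> c" using g cc nc by (simp add: m_assoc inv_cancel_l1 inv_cancel_l2)
      ultimately show "g \<in> N <#> C" using c unfolding set_mult_def by auto
    qed
  next
    show "N <#> C \<subseteq> C <#> N"
    proof
      fix g assume "g \<in> N <#> C"
      then obtain c n where c: "c \<in> C" and n: "n \<in> N" and g: "g = n \<otimes> c" unfolding set_mult_def by auto
      have cc: "c \<in> carrier G" and nc: "n \<in> carrier G" using c n CC NC by auto
      have "inv c \<otimes> n \<otimes> c \<in> N" using normal.inv_op_closed1[OF Nn cc n] .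
      moreover have "g = c \<otimes> (inv c \<otimes> n \<otimes> c)" using g cc nc by (simp add: m_assoc[symmetric])
      ultimately show "g \<in> C <#> N" using c unfolding set_mult_def by auto
    qed
  qed
  have Ks: "subgroup (C <#> N) G" unfolding CNeq by (rule mult_norm_subgroup[OF Nn Cs])
  have CK: "C \<subseteq> C <#> N"
  proof
    fix c assume c: "c \<in> C"
    hence "c = c \<otimes> \<one>" using CC by auto
    thus "c \<in> C <#> N" using c one_N unfolding set_mult_def by blast
  qed
  obtain n0 where n0: "n0 \<in> N" "n0 \<noteq> \<one>" using N1 one_N by blast
  have n0K: "n0 \<in> C <#> N" using n0 one_C NC unfolding set_mult_def by force
  have n0C: "n0 \<notin> C" using CN n0 by auto
  have frob: "\<forall>g \<in> (C <#> N) - C. C \<inter> (\<lambda>h. g \<otimes> h \<otimes> inv g) ` C = {\<one>}"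
  proof
    fix g assume gK: "g \<in> (C <#> N) - C"
    then obtain c n where c: "c \<in> C" and n: "n \<in> N" and g: "g = c \<otimes> n" unfolding set_mult_def by auto
    have cc: "c \<in> carrier G" and nc: "n \<in> carrier G" using c n CC NC by auto
    have n1: "n \<noteq> \<one>" using gK g c cc by auto
    show "C \<inter> (\<lambda>h. g \<otimes> h \<otimes> inv g) ` C = {\<one>}"
    proof
      show "{\<one>} \<subseteq> C \<inter> (\<lambda>h. g \<otimes> h \<otimes> inv g) ` C"
      proof -
        have "\<one> = g \<otimes> \<one> \<otimes> inv g" using g cc nc by simp
        thus ?thesis using one_C by blast
      qed
      show "C \<inter> (\<lambda>h. g \<otimes> h \<otimes> inv g) ` C \<subseteq> {\<one>}"
      proof
        fix h assume "h \<in> C \<inter> (\<lambda>h. g \<otimes> h \<otimes> inv g) ` C"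
        then obtain k where h: "h \<in> C" and k: "k \<in> C" and hk: "h = g \<otimes> k \<otimes> inv g" by auto
        have hc: "h \<in> carrier G" and kc: "k \<in> carrier G" using h k CC by auto
        define h' where "h' = inv c \<otimes> h \<otimes> c"
        have h'C: "h' \<in> C" unfolding h'_def
          by (intro subgroup.m_closed[OF Cs] subgroup.m_inv_closed[OF Cs] h c)
        have h'e: "h' = n \<otimes> k \<otimes> inv n"
          unfolding h'_def hk g using cc nc kc
          by (simp add: m_assoc inv_mult_group inv_cancel_l1 inv_cancel_l2)
        define d where "d = h' \<otimes> inv k"
        have dC: "d \<in> C" unfolding d_def
          by (intro subgroup.m_closed[OF Cs] subgroup.m_inv_closed[OF Cs] h'C k)
        have "k \<otimes> inv n \<otimes> inv k \<in> N" using normal.inv_op_closed2[OF Nn kc Ns[THEN subgroup.m_inv_closed, OF n]] .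
        hence "n \<otimes> (k \<otimes> inv n \<otimes> inv k) \<in> N" by (rule subgroup.m_closed[OF Ns n])
        moreover have "d = n \<otimes> (k \<otimes> inv n \<otimes> inv k)" unfolding d_def h'e using nc kc by (simp add: m_assoc inv_cancel_l1 inv_cancel_l2)
        ultimately have "d = \<one>" using CN dC by auto
        moreover have "h' = d \<otimes> k" unfolding d_def using h'C kc CC by (auto simp: m_assoc)
        ultimately have hk': "h' = k" using kc by simp
        have "k \<otimes> n = n \<otimes> k"
        proof -
          have keq: "k = n \<otimes> k \<otimes> inv n" using hk' h'e by metis
          have "k \<otimes> n = n \<otimes> k \<otimes> inv n \<otimes> n"
            by (rule arg_cong[OF keq, where f = "\<lambda>z. z \<otimes> n"])
          also have "\<dots> = n \<otimes> k" using nc kc by (simp add: m_assoc inv_cancel_l1 inv_cancel_l2)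
          finally show ?thesis .
        qed
        hence "k = \<one>" using fpf k n n1 by blast
        hence "h' = \<one>" using hk' by simp
        moreover have "h = c \<otimes> h' \<otimes> inv c" unfolding h'_def using hc cc
          by (simp add: m_assoc inv_cancel_l2)
        ultimately show "h \<in> {\<one>}" using cc by simp
      qed
    qed
  qed
  have part1: "frobenius_with_complement G (C <#> N) C"
    unfolding frobenius_with_complement_def
    using Ks Cs CK one_C yC y1 n0K n0C frob by auto
  have odd: "odd (card C)"
  proof
    assume ev: "even (card C)"
    have finC: "finite C" using CC assms(2) finite_subset by blast
    obtain t where t: "t \<in> C" "t \<noteq> \<one>" "t \<otimes> t = \<one>" using involution_exists[OF Cs finC ev] by blast
    have tc: "t \<in> carrier G" using t CC by auto
    have it: "inv t = t" using t tc by (metis inv_equality)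
    define f where "f = (\<lambda>n. inv n \<otimes> (t \<otimes> n \<otimes> inv t))"
    have fN: "f ` N \<subseteq> N"
    proof
      fix z assume "z \<in> f ` N"
      then obtain n where n: "n \<in> N" and z: "z = f n" by blast
      show "z \<in> N" unfolding z f_def
        by (intro subgroup.m_closed[OF Ns] subgroup.m_inv_closed[OF Ns] n normal.inv_op_closed2[OF Nn tc])
    qed
    have "inj_on f N"
    proof
      fix a b assume a: "a \<in> N" and b: "b \<in> N" and e: "f a = f b"
      have ac: "a \<in> carrier G" and bc: "b \<in> carrier G" using a b NC by auto
      let ?m = "b \<otimes> inv a"
      have mN: "?m \<in> N" by (intro subgroup.m_closed[OF Ns] subgroup.m_inv_closed[OF Ns] a b)
      have "t \<otimes> ?m \<otimes> inv t = ?m"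
      proof -
        have "b \<otimes> f a = b \<otimes> f b" using e by simp
        hence "b \<otimes> inv a \<otimes> (t \<otimes> a \<otimes> inv t) = t \<otimes> b \<otimes> inv t"
          unfolding f_def using ac bc tc by (simp add: m_assoc[symmetric])
        hence "b \<otimes> inv a \<otimes> (t \<otimes> a \<otimes> inv t) \<otimes> (t \<otimes> inv a \<otimes> inv t) = t \<otimes> b \<otimes> inv t \<otimes> (t \<otimes> inv a \<otimes> inv t)"
          by simp
        hence H: "b \<otimes> inv a = t \<otimes> (b \<otimes> (inv a \<otimes> inv t))" using ac bc tc by (simp add: m_assoc inv_cancel_l1 inv_cancel_l2)
        have "t \<otimes> ?m \<otimes> inv t = t \<otimes> (b \<otimes> (inv a \<otimes> inv t))" using ac bc tc by (simp add: m_assoc)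
        also have "\<dots> = ?m" by (rule H[symmetric])
        finally show ?thesis .
      qed
      moreover have mc: "?m \<in> carrier G" using mN NC by auto
      ultimately have "t \<otimes> ?m = ?m \<otimes> t" using tc
        using inv_solve_right' by (metis m_closed)
      hence "?m = \<one>" using fpf t mN by auto
      hence "b = \<one> \<otimes> a" using inv_solve_right'[of "\<one>" b a] ac bc by simp
      thus "a = b" using ac by simp
    qed
    moreover have "finite N" using assms(2) NC finite_subset by blast
    ultimately have fsurj: "f ` N = N" using fN endo_inj_surj by blast
    have inverts: "\<And>m. m \<in> N \<Longrightarrow> t \<otimes> m \<otimes> inv t = inv m"
    proof -
      fix m assume m: "m \<in> N"
      then obtain n where n: "n \<in> N" and mf: "m = f n" using fsurj by (metis imageE)
      have nc: "n \<in> carrier G" using n NC by auto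
      show "t \<otimes> m \<otimes> inv t = inv m"
        unfolding mf f_def using nc tc it t(3)
        by (simp add: m_assoc inv_mult_group inv_cancel_l1 inv_cancel_l2)
    qed
    have ct: "cyc G t \<subseteq> {\<one>, t}"
      unfolding cyc_def
    proof (rule generate_subgroup_incl)
      show "{t} \<subseteq> {\<one>, t}" by auto
      show "subgroup {\<one>, t} G" using tc it t(3) by (intro subgroupI) auto
    qed
    have cn: "cyc G n0 \<subseteq> N" unfolding cyc_def
      by (rule generate_subgroup_incl) (use n0 Ns in auto)
    have cnc: "cyc G n0 \<subseteq> carrier G" using cyc_carrier n0 NC by auto
    have cninv: "\<And>k. k \<in> cyc G n0 \<Longrightarrow> inv k \<in> cyc G n0"
      unfolding cyc_def using n0 NC by (intro generate_m_inv_closed) auto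
    have "normalises G (cyc G t) (cyc G n0)"
      unfolding normalises_def
    proof
      fix h assume "h \<in> cyc G t"
      hence "h = \<one> \<or> h = t" using ct by auto
      thus "(\<lambda>k. h \<otimes> k \<otimes> inv h) ` cyc G n0 = cyc G n0"
      proof
        assume "h = \<one>" thus ?thesis using cnc by (auto simp: subset_iff)
      next
        assume ht: "h = t"
        have eq: "\<And>k. k \<in> cyc G n0 \<Longrightarrow> t \<otimes> k \<otimes> inv t = inv k" using inverts cn by auto
        show ?thesis
        proof
          show "(\<lambda>k. h \<otimes> k \<otimes> inv h) ` cyc G n0 \<subseteq> cyc G n0" using ht eq cninv by auto
          show "cyc G n0 \<subseteq> (\<lambda>k. h \<otimes> k \<otimes> inv h) ` cyc G n0"
          proof
            fix k assume k: "k \<in> cyc G n0"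
            have "k = t \<otimes> inv k \<otimes> inv t" using eq[OF cninv[OF k]] k cnc by auto
            thus "k \<in> (\<lambda>k. h \<otimes> k \<otimes> inv h) ` cyc G n0" using ht cninv[OF k] by blast
          qed
        qed
      qed
    qed
    moreover have "t \<noteq> n0" using t n0C by auto
    ultimately have "norm_adj G t n0" unfolding norm_adj_def using tc t n0 NC by auto
    thus False using key t n0 by blast
  qed
  show ?thesis using part1 odd unfolding C_def by simp
qed

end
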